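(* Fix $x>1$, let $p_1,p_2\ge n$, $p=p_1+p_2$, and let $0<\delta_n\ll1$. Let $$E_n=\left\{(x_1,\dots,x_n)\in\Delta_n:\ \tfrac{p_1}{p}(1-\delta_n)<x_1,\ x_{n-1}<\tfrac{p_1}{p}(1+\delta_n),\ \tfrac{p_1}{p}x<x_n<\tfrac{p_1}{p}(x+\delta_n)\right\},$$ where $\Delta_n=\{(x_1,\dots,x_n)\in[0,1]^n:x_1\le\dots\le x_n\}$. Set $\alpha_2=\frac12-\frac{\delta_n}{x-1}$, $\alpha_1=\frac12+\frac{\delta_n}{x-1}$ and $\bar x_i=\frac{px_i-p_1}{p_1(x-1)}$. Then for all $(x_1,\dots,x_n)\in E_n$, $$\prod_{i=1}^{n-1}(x_n-x_i)\le\left(\frac{p_1(x-1)}{p}\right)^{n-1}\exp\left\{(n+o(n))\frac{px_n-p_1x}{p_1(x-1)}-\sum_{i=1}^{n-1}\bar x_i-\alpha_2\sum_{i=1}^{n-1}\bar x_i^2\right\}$$ and $$\prod_{i=1}^{n-1}(x_n-x_i)\ge\left(\frac{p_1(x-1)}{p}\right)^{n-1}\exp\left\{-\sum_{i=1}^{n-1}\bar x_i-\alpha_1\sum_{i=1}^{n-1}\bar x_i^2\right\}.$$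
   Context: $\delta_n\ll1$ means $\delta_n\to0$ as $n\to\infty$. In the upper bound, $n+o(n)$ denotes a quantity whose ratio to $n$ tends to $1$ as $n\to\infty$ (the bound holds for $n$ large enough). *)

theory Defs
  imports Complex_Main
begin

text \<open>Points of R^n are encoded as functions nat => real, coordinates indexed by 1..n.\<close>

definition simplex :: "nat \<Rightarrow> (nat \<Rightarrow> real) set" where
  "simplex n = {y. (\<forall>i\<in>{1..n}. 0 \<le> y i \<and> y i \<le> 1) \<and>
                   (\<forall>i j. 1 \<le> i \<longrightarrow> i \<le> j \<longrightarrow> j \<le> n \<longrightarrow> y i \<le> y j)}"

definition En :: "real \<Rightarrow> real \<Rightarrow> real \<Rightarrow> real \<Rightarrow> nat \<Rightarrow> (nat \<Rightarrow> real) set" where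
  "En x p1 p2 d n = {y \<in> simplex n.
      p1 / (p1 + p2) * (1 - d) < y 1 \<and> y (n - 1) < p1 / (p1 + p2) * (1 + d) \<and>
      p1 / (p1 + p2) * x < y n \<and> y n < p1 / (p1 + p2) * (x + d)}"

definition xbar :: "real \<Rightarrow> real \<Rightarrow> real \<Rightarrow> real \<Rightarrow> real" where
  "xbar x p1 p2 t = ((p1 + p2) * t - p1) / (p1 * (x - 1))"

end

theory Submission imports Defs begin

lemma der_f:
  assumes "v < 1"
  shows "((\<lambda>v. ln (1 - v) + v + k * v^2) has_real_derivative (- 1 / (1 - v) + 1 + 2 * k * v)) (at v)"
  using assms by (auto intro!: derivative_eq_intros simp: field_simps)

lemma lnL:
  fixes e u :: real
  assumes "0 < e" "e \<le> 1/2" "\<bar>u\<bar> \<le> e"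
  shows "-u - (1/2+e)*u^2 \<le> ln (1-u)"
proof -
  define f where "f = (\<lambda>v::real. ln (1 - v) + v + (1/2+e) * v^2)"
  have f0: "f 0 = 0" by (simp add: f_def)
  have d: "\<And>v. v < 1 \<Longrightarrow> (f has_real_derivative (v * ((1 + 2*e) - 1/(1-v)))) (at v)"
  proof -
    fix v :: real assume v: "v < 1"
    have "- 1 / (1 - v) + 1 + 2 * (1/2+e) * v = v * ((1 + 2*e) - 1/(1-v))"
      using v by (simp add: field_simps)
    then show "(f has_real_derivative (v * ((1 + 2*e) - 1/(1-v)))) (at v)"
      using der_f[OF v, of "1/2+e"] unfolding f_def by simp
  qed
  have "f 0 \<le> f u"
  proof (cases "u \<ge> 0")
    case True
    show ?thesis
    proof (rule DERIV_nonneg_imp_nondecreasing[OF True])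
      fix v assume v: "0 \<le> v" "v \<le> u"
      have v1: "v < 1" using v assms by linarith
      have "1/(1-v) \<le> 1 + 2*e"
      proof -
        have "1 \<le> (1 + 2*e) * (1 - v)"
        proof -
          have "(1 + 2*e) * (1 - v) \<ge> (1 + 2*e) * (1 - e)"
            using v assms by (intro mult_left_mono) auto
          moreover have "(1 + 2*e) * (1 - e) \<ge> 1" using assms by (simp add: algebra_simps power2_eq_square)
          ultimately show ?thesis by linarith
        qed
        then show ?thesis using v1 by (simp add: divide_le_eq mult.commute)
      qed
      then show "\<exists>y. DERIV f v :> y \<and> y \<ge> 0" using d[OF v1] v by (intro exI[of _ "v * ((1 + 2*e) - 1/(1-v))"]) auto
    qed
  next
    case False
    show ?thesis
    proof (rule DERIV_nonpos_imp_nonincreasing[of u 0])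
      show "u \<le> 0" using False by simp
      fix v assume v: "u \<le> v" "v \<le> 0"
      have v1: "v < 1" using v by linarith
      have "1/(1-v) \<le> 1" using v by (simp add: divide_le_eq)
      then have "1/(1-v) \<le> 1 + 2*e" using assms by linarith
      then show "\<exists>y. DERIV f v :> y \<and> y \<le> 0" using d[OF v1] v assms
        by (intro exI[of _ "v * ((1 + 2*e) - 1/(1-v))"]) (auto intro!: mult_nonpos_nonneg)
    qed
  qed
  then show ?thesis using f0 unfolding f_def by simp
qed

lemma lnU:
  fixes e u :: real
  assumes "0 < e" "e \<le> 1/2" "\<bar>u\<bar> \<le> e"
  shows "ln (1-u) \<le> -u - (1/2-e)*u^2"
proof -
  define f where "f = (\<lambda>v::real. ln (1 - v) + v + (1/2-e) * v^2)"
  have f0: "f 0 = 0" by (simp add: f_def)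
  have d: "\<And>v. v < 1 \<Longrightarrow> (f has_real_derivative (v * ((1 - 2*e) - 1/(1-v)))) (at v)"
  proof -
    fix v :: real assume v: "v < 1"
    have "- 1 / (1 - v) + 1 + 2 * (1/2-e) * v = v * ((1 - 2*e) - 1/(1-v))"
      using v by (simp add: field_simps)
    then show "(f has_real_derivative (v * ((1 - 2*e) - 1/(1-v)))) (at v)"
      using der_f[OF v, of "1/2-e"] unfolding f_def by simp
  qed
  have "f u \<le> f 0"
  proof (cases "u \<ge> 0")
    case True
    show ?thesis
    proof (rule DERIV_nonpos_imp_nonincreasing[OF True])
      fix v assume v: "0 \<le> v" "v \<le> u"
      have v1: "v < 1" using v assms by linarith
      have "1 \<le> 1/(1-v)" using v v1 by (simp add: le_divide_eq)
      then have "1 - 2*e \<le> 1/(1-v)" using assms by linarith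
      then show "\<exists>y. DERIV f v :> y \<and> y \<le> 0" using d[OF v1] v assms
        by (intro exI[of _ "v * ((1 - 2*e) - 1/(1-v))"]) (auto intro!: mult_nonneg_nonpos)
    qed
  next
    case False
    show ?thesis
    proof (rule DERIV_nonneg_imp_nondecreasing[of u 0])
      show "u \<le> 0" using False by simp
      fix v assume v: "u \<le> v" "v \<le> 0"
      have v1: "v < 1" using v by linarith
      have "1 - 2*e \<le> 1/(1-v)"
      proof -
        have "(1 - 2*e) * (1 - v) \<le> (1 - 2*e) * (1 + e)"
          using v assms by (intro mult_left_mono) auto
        moreover have "(1 - 2*e) * (1 + e) \<le> 1" using assms by (simp add: algebra_simps power2_eq_square)
        ultimately have "(1 - 2*e) * (1 - v) \<le> 1" by linarith
        then show ?thesis using v1 by (simp add: le_divide_eq)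
      qed
      then show "\<exists>y. DERIV f v :> y \<and> y \<ge> 0" using d[OF v1] v assms
        by (intro exI[of _ "v * ((1 - 2*e) - 1/(1-v))"]) (auto intro!: mult_nonpos_nonpos)
    qed
  qed
  then show ?thesis using f0 unfolding f_def by simp
qed

lemma per_n:
  fixes x p1 p2 d e :: real and n :: nat and y :: "nat \<Rightarrow> real"
  assumes x: "x > 1" and p1: "p1 > 0" and p2: "p2 \<ge> 0" and n: "n \<ge> 1" and d: "d > 0"
    and e: "e = d / (x - 1)" and e2: "e \<le> 1/2" and y: "y \<in> En x p1 p2 d n"
  shows "(\<Prod>i\<in>{1..n-1}. y n - y i)
              \<le> (p1 * (x - 1) / (p1 + p2)) ^ (n - 1) *
                 exp ((real n / (1 - e)) * (((p1 + p2) * y n - p1 * x) / (p1 * (x - 1)))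
                      - (\<Sum>i\<in>{1..n-1}. xbar x p1 p2 (y i))
                      - (1/2 - e) * (\<Sum>i\<in>{1..n-1}. (xbar x p1 p2 (y i))^2))"
    and "(\<Prod>i\<in>{1..n-1}. y n - y i)
              \<ge> (p1 * (x - 1) / (p1 + p2)) ^ (n - 1) *
                 exp (- (\<Sum>i\<in>{1..n-1}. xbar x p1 p2 (y i))
                      - (1/2 + e) * (\<Sum>i\<in>{1..n-1}. (xbar x p1 p2 (y i))^2))"
proof -
  define P where "P = p1 + p2"
  have P: "P > 0" using p1 p2 by (simp add: P_def)
  define K where "K = p1 * (x - 1) / P"
  have K: "K > 0" using P p1 x by (simp add: K_def)
  define t where "t = (P * y n - p1 * x) / (p1 * (x - 1))"
  define u where "u = (\<lambda>i. xbar x p1 p2 (y i))"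
  have e0: "e > 0" using e d x by simp
  have ysim: "y \<in> simplex n" and y1: "p1 / P * (1 - d) < y 1" and yn1: "y (n - 1) < p1 / P * (1 + d)"
    and yn: "p1 / P * x < y n"
    using y by (auto simp: En_def P_def)
  have "P * (p1 / P * x) < P * y n" using yn P by (intro mult_strict_left_mono) auto
  then have "p1 * x < P * y n" using P by simp
  then have t0: "t > 0" using p1 x by (simp add: t_def)
  have ubound: "\<bar>u i\<bar> < e" if i: "i \<in> {1..n-1}" for i
  proof -
    have "y 1 \<le> y i" "y i \<le> y (n-1)" using ysim i by (auto simp: simplex_def)
    then have a: "p1 / P * (1 - d) < y i" "y i < p1 / P * (1 + d)" using y1 yn1 by auto
    have "P * (p1 / P * (1 - d)) < P * y i" "P * y i < P * (p1 / P * (1 + d))"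
      using a P by (intro mult_strict_left_mono; simp)+
    moreover have "P * (p1 / P * (1 - d)) = p1 - p1 * d" "P * (p1 / P * (1 + d)) = p1 + p1 * d"
      using P by (simp_all add: field_simps)
    ultimately have b: "p1 - p1 * d < P * y i" "P * y i < p1 + p1 * d" by simp_all
    have "\<bar>P * y i - p1\<bar> < p1 * d" using b by linarith
    then have "\<bar>P * y i - p1\<bar> / (p1 * (x - 1)) < p1 * d / (p1 * (x - 1))"
      using p1 x by (intro divide_strict_right_mono) auto
    moreover have "p1 * d / (p1 * (x - 1)) = e" using p1 e by simp
    moreover have "\<bar>u i\<bar> = \<bar>P * y i - p1\<bar> / (p1 * (x - 1))"
      using p1 x by (simp add: u_def xbar_def P_def abs_divide abs_mult)
    ultimately show ?thesis by simp
  qed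
  have ident: "y n - y i = K * (1 + t - u i)" for i
  proof -
    have x1: "x - 1 \<noteq> 0" using x by simp
    have "K * t = (P * y n - p1 * x) / P" using x1 p1 P by (simp add: K_def t_def)
    moreover have "K * u i = (P * y i - p1) / P" using x1 p1 P by (simp add: K_def u_def xbar_def P_def)
    moreover have "K = (p1 * x - p1) / P" by (simp add: K_def algebra_simps)
    moreover have "K * (1 + t - u i) = K + K * t - K * u i" by (simp add: algebra_simps)
    ultimately have "K * (1 + t - u i) = (p1 * x - p1) / P + (P * y n - p1 * x) / P - (P * y i - p1) / P"
      by metis
    also have "\<dots> = (P * y n - P * y i) / P" by (simp add: diff_divide_distrib add_divide_distrib)
    also have "\<dots> = y n - y i" using P by (simp add: field_simps)
    finally show ?thesis by simp
  qed
  have card: "card {1..n-1} = n - 1" by simp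
  have prodK: "(\<Prod>i\<in>{1..n-1}. y n - y i) = K ^ (n - 1) * (\<Prod>i\<in>{1..n-1}. 1 + t - u i)"
    by (simp add: ident prod.distrib)
  have Kpow: "K ^ (n - 1) \<ge> 0" using K by simp
  have low1: "exp (- u i - (1/2 + e) * (u i)^2) \<le> 1 + t - u i" if i: "i \<in> {1..n-1}" for i
  proof -
    have ui: "\<bar>u i\<bar> \<le> e" using ubound[OF i] by simp
    have "u i < 1" using ubound[OF i] e2 by linarith
    have "exp (- u i - (1/2 + e) * (u i)^2) \<le> exp (ln (1 - u i))"
      by (rule exp_mono[OF lnL[OF e0 e2 ui]])
    also have "\<dots> = 1 - u i" using \<open>u i < 1\<close> by simp
    finally show ?thesis using t0 by simp
  qed
  have "(\<Prod>i\<in>{1..n-1}. exp (- u i - (1/2 + e) * (u i)^2)) \<le> (\<Prod>i\<in>{1..n-1}. 1 + t - u i)"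
    using low1 by (intro prod_mono) auto
  moreover have "(\<Prod>i\<in>{1..n-1}. exp (- u i - (1/2 + e) * (u i)^2))
     = exp (- (\<Sum>i\<in>{1..n-1}. u i) - (1/2 + e) * (\<Sum>i\<in>{1..n-1}. (u i)^2))"
    by (simp add: exp_sum[symmetric] sum_subtractf sum_negf sum_distrib_left)
  ultimately show "(\<Prod>i\<in>{1..n-1}. y n - y i)
              \<ge> (p1 * (x - 1) / (p1 + p2)) ^ (n - 1) *
                 exp (- (\<Sum>i\<in>{1..n-1}. xbar x p1 p2 (y i))
                      - (1/2 + e) * (\<Sum>i\<in>{1..n-1}. (xbar x p1 p2 (y i))^2))"
    using prodK Kpow by (simp add: K_def P_def u_def mult_left_mono)
  have up1: "1 + t - u i \<le> exp (t / (1 - e) + (- u i - (1/2 - e) * (u i)^2))" if i: "i \<in> {1..n-1}" for i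
  proof -
    have ui: "\<bar>u i\<bar> \<le> e" using ubound[OF i] by simp
    have u1: "u i < 1" using ubound[OF i] e2 by linarith
    have "1 + t - u i = (1 - u i) * (1 + t / (1 - u i))" using u1 by (simp add: field_simps)
    also have "\<dots> \<le> (1 - u i) * exp (t / (1 - u i))"
      using u1 by (intro mult_left_mono exp_ge_add_one_self) auto
    also have "\<dots> \<le> exp (- u i - (1/2 - e) * (u i)^2) * exp (t / (1 - e))"
    proof (intro mult_mono)
      have "1 - u i = exp (ln (1 - u i))" using u1 by simp
      also have "\<dots> \<le> exp (- u i - (1/2 - e) * (u i)^2)" by (rule exp_mono[OF lnU[OF e0 e2 ui]])
      finally show "1 - u i \<le> exp (- u i - (1/2 - e) * (u i)^2)" .
      have "1 - e \<le> 1 - u i" "0 < 1 - e" using ui e2 by auto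
      then have "t / (1 - u i) \<le> t / (1 - e)" using t0 by (intro divide_left_mono) auto
      then show "exp (t / (1 - u i)) \<le> exp (t / (1 - e))" by simp
    qed auto
    also have "\<dots> = exp (t / (1 - e) + (- u i - (1/2 - e) * (u i)^2))" by (simp add: exp_add)
    finally show ?thesis .
  qed
  have "(\<Prod>i\<in>{1..n-1}. 1 + t - u i) \<le> (\<Prod>i\<in>{1..n-1}. exp (t / (1 - e) + (- u i - (1/2 - e) * (u i)^2)))"
  proof (intro prod_mono conjI)
    fix i assume i: "i \<in> {1..n-1}"
    show "0 \<le> 1 + t - u i" using ubound[OF i] e2 t0 by (simp add: abs_less_iff)
    show "1 + t - u i \<le> exp (t / (1 - e) + (- u i - (1/2 - e) * (u i)^2))" using up1[OF i] .
  qed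
  also have "\<dots> = exp (real (n - 1) * (t / (1 - e)) - (\<Sum>i\<in>{1..n-1}. u i) - (1/2 - e) * (\<Sum>i\<in>{1..n-1}. (u i)^2))"
    by (simp add: exp_sum[symmetric] sum.distrib sum_subtractf sum_negf sum_distrib_left)
  also have "\<dots> \<le> exp ((real n / (1 - e)) * t - (\<Sum>i\<in>{1..n-1}. u i) - (1/2 - e) * (\<Sum>i\<in>{1..n-1}. (u i)^2))"
  proof -
    have "real (n - 1) * (t / (1 - e)) \<le> real n * (t / (1 - e))"
      using t0 e2 by (intro mult_right_mono) auto
    then show ?thesis by simp
  qed
  finally have "(\<Prod>i\<in>{1..n-1}. 1 + t - u i) \<le> exp ((real n / (1 - e)) * t - (\<Sum>i\<in>{1..n-1}. u i) - (1/2 - e) * (\<Sum>i\<in>{1..n-1}. (u i)^2))" .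
  then show "(\<Prod>i\<in>{1..n-1}. y n - y i)
              \<le> (p1 * (x - 1) / (p1 + p2)) ^ (n - 1) *
                 exp ((real n / (1 - e)) * (((p1 + p2) * y n - p1 * x) / (p1 * (x - 1)))
                      - (\<Sum>i\<in>{1..n-1}. xbar x p1 p2 (y i))
                      - (1/2 - e) * (\<Sum>i\<in>{1..n-1}. (xbar x p1 p2 (y i))^2))"
    using prodK Kpow by (simp add: K_def P_def t_def u_def mult_left_mono)
qed

theorem lemma6:
  fixes x :: real and p1 p2 :: "nat \<Rightarrow> nat" and \<delta> :: "nat \<Rightarrow> real"
  assumes "x > 1"
    and "\<forall>n. p1 n \<ge> n" and "\<forall>n. p2 n \<ge> n"
    and "\<forall>n. \<delta> n > 0" and "\<delta> \<longlonglongrightarrow> 0"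
  shows "(\<exists>c :: nat \<Rightarrow> real. (\<lambda>n. c n / real n) \<longlonglongrightarrow> 1 \<and>
           (\<forall>\<^sub>F n in sequentially. \<forall>y \<in> En x (p1 n) (p2 n) (\<delta> n) n.
              (\<Prod>i\<in>{1..n-1}. y n - y i)
              \<le> (real (p1 n) * (x - 1) / (real (p1 n) + real (p2 n))) ^ (n - 1) *
                 exp (c n * (((real (p1 n) + real (p2 n)) * y n - real (p1 n) * x) / (real (p1 n) * (x - 1)))
                      - (\<Sum>i\<in>{1..n-1}. xbar x (p1 n) (p2 n) (y i))
                      - (1/2 - \<delta> n / (x - 1)) * (\<Sum>i\<in>{1..n-1}. (xbar x (p1 n) (p2 n) (y i))^2))))
       \<and> (\<forall>\<^sub>F n in sequentially. \<forall>y \<in> En x (p1 n) (p2 n) (\<delta> n) n.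
              (\<Prod>i\<in>{1..n-1}. y n - y i)
              \<ge> (real (p1 n) * (x - 1) / (real (p1 n) + real (p2 n))) ^ (n - 1) *
                 exp (- (\<Sum>i\<in>{1..n-1}. xbar x (p1 n) (p2 n) (y i))
                      - (1/2 + \<delta> n / (x - 1)) * (\<Sum>i\<in>{1..n-1}. (xbar x (p1 n) (p2 n) (y i))^2)))"
proof -
  let ?e = "\<lambda>n. \<delta> n / (x - 1)"
  define c where "c = (\<lambda>n. real n / (1 - ?e n))"
  have x1: "x > 1" using assms by simp
  have elim: "?e \<longlonglongrightarrow> 0" using tendsto_divide[OF assms(5) tendsto_const[of "x - 1"]] x1 by simp
  have ev_e: "\<forall>\<^sub>F n in sequentially. ?e n \<le> 1/2"
    using order_tendstoD(2)[OF elim, of "1/2"] by (auto elim: eventually_mono)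
  have ev_n: "\<forall>\<^sub>F n in sequentially. n \<ge> (1::nat)" by (rule eventually_ge_at_top)
  have lim1: "(\<lambda>n. 1 / (1 - ?e n)) \<longlonglongrightarrow> 1"
    using tendsto_divide[OF tendsto_const[of 1] tendsto_diff[OF tendsto_const[of 1] elim]] by simp
  have "(\<lambda>n. c n / real n) \<longlonglongrightarrow> 1"
  proof (rule Lim_transform_eventually[OF lim1])
    show "\<forall>\<^sub>F n in sequentially. 1 / (1 - ?e n) = c n / real n"
      using ev_n by eventually_elim (simp add: c_def)
  qed
  moreover have A: "\<forall>\<^sub>F n in sequentially. \<forall>y \<in> En x (p1 n) (p2 n) (\<delta> n) n.
              (\<Prod>i\<in>{1..n-1}. y n - y i)
              \<le> (real (p1 n) * (x - 1) / (real (p1 n) + real (p2 n))) ^ (n - 1) *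
                 exp (c n * (((real (p1 n) + real (p2 n)) * y n - real (p1 n) * x) / (real (p1 n) * (x - 1)))
                      - (\<Sum>i\<in>{1..n-1}. xbar x (p1 n) (p2 n) (y i))
                      - (1/2 - \<delta> n / (x - 1)) * (\<Sum>i\<in>{1..n-1}. (xbar x (p1 n) (p2 n) (y i))^2))"
    using ev_e ev_n
  proof eventually_elim
    case (elim n)
    have p1: "real (p1 n) > 0" using assms(2) elim(2) by (metis of_nat_0_less_iff order_less_le_trans zero_less_one)
    show ?case
      using per_n(1)[OF x1 p1 _ elim(2) assms(4)[rule_format] refl elim(1)] unfolding c_def by simp
  qed
  moreover have B: "\<forall>\<^sub>F n in sequentially. \<forall>y \<in> En x (p1 n) (p2 n) (\<delta> n) n.
              (\<Prod>i\<in>{1..n-1}. y n - y i)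
              \<ge> (real (p1 n) * (x - 1) / (real (p1 n) + real (p2 n))) ^ (n - 1) *
                 exp (- (\<Sum>i\<in>{1..n-1}. xbar x (p1 n) (p2 n) (y i))
                      - (1/2 + \<delta> n / (x - 1)) * (\<Sum>i\<in>{1..n-1}. (xbar x (p1 n) (p2 n) (y i))^2))"
    using ev_e ev_n
  proof eventually_elim
    case (elim n)
    have p1: "real (p1 n) > 0" using assms(2) elim(2) by (metis of_nat_0_less_iff order_less_le_trans zero_less_one)
    show ?case
      using per_n(2)[OF x1 p1 _ elim(2) assms(4)[rule_format] refl elim(1)] by simp
  qed
  ultimately show ?thesis by blast
qed

end
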